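(* Let $\Sigma_0>0$, $\sigma_u>0$, $\Delta t=\tfrac12$, and let real numbers $\beta_1,\beta_2,\lambda_1,\lambda_2,\alpha_1,\Sigma_1$ with $\alpha_2=0$ form a two-period linear equilibrium of Kyle's (1985) model, i.e. for $n=1,2$: $$\beta_n=\frac{1-2\alpha_n\lambda_n}{2\lambda_n(1-\alpha_n\lambda_n)},\quad \lambda_n=\frac{\beta_n\Sigma_{n-1}}{\beta_n^2\Sigma_{n-1}+\sigma_u^2\Delta t},\quad \Sigma_n=(1-\lambda_n\beta_n)\Sigma_{n-1},\quad \lambda_n(1-\alpha_n\lambda_n)>0,$$ and $\alpha_1=\dfrac{1}{4\lambda_2(1-\alpha_2\lambda_2)}$. Define $\ell(b)=\dfrac{b\Sigma_0}{b^2\Sigma_0+\sigma_u^2\Delta t}$ for $b\in\mathbb R$ (the first-period pricing rule as a function of the first-period trading intensity under semi-strong market efficiency). Then $\ell'(\beta_1)>0$.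
   Context: Kyle's two-period model: asset value $v\sim N(p_0,\Sigma_0)$; noise orders $u_1,u_2$ i.i.d. $N(0,\sigma_u^2\Delta t)$ independent of $v$; the insider submits $x_n=\beta_n(v-p_{n-1})$; prices move by $p_n-p_{n-1}=\lambda_n(x_n+u_n)$. In Kyle's equilibrium the insider treats $\lambda_n$ as a constant not affected by her choice of $\beta_n$, which yields the displayed equations; the equation $\lambda_n=\beta_n\Sigma_{n-1}/(\beta_n^2\Sigma_{n-1}+\sigma_u^2\Delta t)$ expresses semi-strong market efficiency $p_n=E[v\mid x_1+u_1,\dots,x_n+u_n]$, with $\Sigma_n$ the conditional variance of $v$ after $n$ rounds. *)

theory Defs
  imports "HOL-Analysis.Analysis"
begin

definition kyle_ell :: "real \<Rightarrow> real \<Rightarrow> real \<Rightarrow> real \<Rightarrow> real" where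
  "kyle_ell Sigma0 sigma_u dt b = b * Sigma0 / (b^2 * Sigma0 + sigma_u^2 * dt)"

end

theory Submission
  imports Defs
begin

lemma ell_deriv:
  fixes S c b :: real
  assumes "S > 0" "c > 0"
  shows "((\<lambda>b. b * S / (b^2 * S + c)) has_real_derivative
           (S * (b^2 * S + c) - b * S * (2 * b * S)) / (b^2 * S + c)^2) (at b)"
proof -
  have D: "b^2 * S + c \<noteq> 0" using assms by (smt (verit) mult_nonneg_nonneg zero_le_power2)
  show ?thesis
    by (rule derivative_eq_intros refl | use D in \<open>auto simp: power2_eq_square\<close>)+
qed

theorem proposition1:
  fixes Sigma0 Sigma1 Sigma2 sigma_u dt beta1 beta2 lambda1 lambda2 alpha1 alpha2 :: real
  assumes "Sigma0 > 0" and "sigma_u > 0" and "dt = 1/2" and "alpha2 = 0"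
    and "beta1 = (1 - 2 * alpha1 * lambda1) / (2 * lambda1 * (1 - alpha1 * lambda1))"
    and "lambda1 = beta1 * Sigma0 / (beta1^2 * Sigma0 + sigma_u^2 * dt)"
    and "Sigma1 = (1 - lambda1 * beta1) * Sigma0"
    and "lambda1 * (1 - alpha1 * lambda1) > 0"
    and "beta2 = (1 - 2 * alpha2 * lambda2) / (2 * lambda2 * (1 - alpha2 * lambda2))"
    and "lambda2 = beta2 * Sigma1 / (beta2^2 * Sigma1 + sigma_u^2 * dt)"
    and "Sigma2 = (1 - lambda2 * beta2) * Sigma1"
    and "lambda2 * (1 - alpha2 * lambda2) > 0"
    and "alpha1 = 1 / (4 * lambda2 * (1 - alpha2 * lambda2))"
  shows "deriv (kyle_ell Sigma0 sigma_u dt) beta1 > 0"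
proof -
  define c where "c = sigma_u^2 * dt"
  have c: "c > 0" using assms(2,3) by (simp add: c_def)
  have l2: "lambda2 > 0" using assms(4,12) by simp
  have a1: "alpha1 = 1 / (4 * lambda2)" using assms(4,13) by simp
  define t where "t = alpha1 * lambda1"
  have t: "t = lambda1 / (4 * lambda2)" using a1 by (simp add: t_def)
  have pos: "lambda1 * (1 - t) > 0" using assms(8) by (simp add: t_def)
  have l1: "lambda1 > 0"
  proof (rule ccontr)
    assume "\<not> lambda1 > 0"
    then have "lambda1 < 0" using pos by (cases "lambda1 = 0") auto
    then have "1 - t < 0" using pos by (simp add: zero_less_mult_iff)
    moreover have "t \<le> 0" using \<open>lambda1 < 0\<close> l2 t by (simp add: divide_nonpos_pos)
    ultimately show False by simp
  qed
  have omt: "1 - t > 0" using pos l1 by (simp add: zero_less_mult_iff)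
  have tp: "t > 0" using t l1 l2 by simp
  have lb: "lambda1 * beta1 = (1 - 2 * t) / (2 * (1 - t))"
    using assms(5) l1 omt unfolding t_def by (simp add: field_simps)
  have lt: "lambda1 * beta1 < 1/2"
    unfolding lb using omt tp by (simp add: field_simps)
  have Dp: "beta1^2 * Sigma0 + c > 0" using assms(1) c
    by (smt (verit) mult_nonneg_nonneg zero_le_power2)
  have lb2: "lambda1 * beta1 = beta1^2 * Sigma0 / (beta1^2 * Sigma0 + c)"
    using assms(6) unfolding c_def by (simp add: power2_eq_square field_simps)
  have key: "beta1^2 * Sigma0 < c"
    using lt Dp unfolding lb2 by (simp add: field_simps)
  have fe: "kyle_ell Sigma0 sigma_u dt = (\<lambda>b. b * Sigma0 / (b^2 * Sigma0 + c))"
    by (rule ext) (simp add: kyle_ell_def c_def)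
  have "deriv (kyle_ell Sigma0 sigma_u dt) beta1 =
     (Sigma0 * (beta1^2 * Sigma0 + c) - beta1 * Sigma0 * (2 * beta1 * Sigma0)) / (beta1^2 * Sigma0 + c)^2"
    unfolding fe by (rule DERIV_imp_deriv[OF ell_deriv[OF assms(1) c]])
  also have "\<dots> = Sigma0 * (c - beta1^2 * Sigma0) / (beta1^2 * Sigma0 + c)^2"
    by (simp add: algebra_simps power2_eq_square)
  also have "\<dots> > 0" using key Dp assms(1) by simp
  finally show ?thesis .
qed

end
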